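(* Let $V$ be a set and $(\mathcal{H}_\ell)_{\ell\in\mathbb{Z}}$ a hypergraph chain over $V$ with Colorful Helly Number $k$. Let $S\subset V$ be a finite subset with $|S|=n$, where $n$ is sufficiently large (in terms of $k$). If for some $t\in\mathbb{Z}$ and $c\in(0,1)$ the inequality $\omega_k(\mathcal{H}_{t+1}|_S)\le cn/2$ holds, then for any $i\in\{1,\dots,k\}$ and any family $\mathcal{F}_i\subset\binom{S}{i}$ with $|\mathcal{F}_i|\ge c\binom{n}{i}$, there exist a family $\mathcal{F}_{i-1}\subset\binom{S}{i-1}$ and a set $M\in\binom{S}{k}\setminus\mathcal{H}_t$ such that $|\mathcal{F}_{i-1}|\ge\left(\frac{c}{12k^2}\right)^k\binom{n}{i-1}$ and $A\cup\{v\}\in\mathcal{F}_i$ for all $A\in\mathcal{F}_{i-1}$ and all $v\in M$.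
   Context: A hypergraph on $V$ is a family $\mathcal{H}\subset 2^V$; it is downwards closed if $H\in\mathcal{H}$, $G\subset H$ imply $G\in\mathcal{H}$. A hypergraph chain over $V$ is a sequence $(\mathcal{H}_\ell)_{\ell\in\mathbb{Z}}$ of downwards closed hypergraphs on $V$ with $\mathcal{H}_\ell\subset\mathcal{H}_{\ell+1}$. For $S_1,\dots,S_k\subset V$, $F\subset V$ is a colorful selection if there is a surjection $\phi:\{1,\dots,k\}\to F$ with $\phi(i)\in S_i$; these form $S_1\otimes\dots\otimes S_k$. The chain has Colorful Helly Number $k$ if for all finite $S_1,\dots,S_k\subset V$ and $\ell$ with $S_1\otimes\dots\otimes S_k\subset\mathcal{H}_\ell$, some $S_j\in\mathcal{H}_{\ell+1}$. $\binom{S}{i}$ denotes the set of $i$-element subsets of $S$. For a hypergraph $\mathcal{H}$ and finite $S$, $\omega_k(\mathcal{H}|_S)$ is the largest size of $K\subset S$ with $\binom{K}{k}\subset\mathcal{H}$. *)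

theory Defs
  imports Complex_Main
begin

definition downwards_closed :: "'a set set \<Rightarrow> bool" where
  "downwards_closed \<H> \<longleftrightarrow> (\<forall>H \<in> \<H>. \<forall>G. G \<subseteq> H \<longrightarrow> G \<in> \<H>)"

definition hypergraph_chain :: "'a set \<Rightarrow> (int \<Rightarrow> 'a set set) \<Rightarrow> bool" where
  "hypergraph_chain V \<H> \<longleftrightarrow>
     (\<forall>l. \<H> l \<subseteq> Pow V \<and> downwards_closed (\<H> l) \<and> \<H> l \<subseteq> \<H> (l + 1))"

definition colorful_selections :: "nat \<Rightarrow> (nat \<Rightarrow> 'a set) \<Rightarrow> 'a set set" where
  "colorful_selections k S =
     {F. \<exists>\<phi>. \<phi> ` {1..k} = F \<and> (\<forall>i\<in>{1..k}. \<phi> i \<in> S i)}"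

definition colorful_helly_number :: "'a set \<Rightarrow> (int \<Rightarrow> 'a set set) \<Rightarrow> nat \<Rightarrow> bool" where
  "colorful_helly_number V \<H> k \<longleftrightarrow>
     (\<forall>S :: nat \<Rightarrow> 'a set. \<forall>l :: int.
        (\<forall>i\<in>{1..k}. finite (S i) \<and> S i \<subseteq> V) \<longrightarrow>
        colorful_selections k S \<subseteq> \<H> l \<longrightarrow>
        (\<exists>j\<in>{1..k}. S j \<in> \<H> (l + 1)))"

definition subsets_of_card :: "'a set \<Rightarrow> nat \<Rightarrow> 'a set set" where
  "subsets_of_card S i = {A. A \<subseteq> S \<and> card A = i}"

definition restrict_hg :: "'a set set \<Rightarrow> 'a set \<Rightarrow> 'a set set" where
  "restrict_hg \<H> S = {A \<in> \<H>. A \<subseteq> S}"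

definition omega :: "nat \<Rightarrow> 'a set set \<Rightarrow> 'a set \<Rightarrow> nat" where
  "omega k \<H> S = Max {card K | K. K \<subseteq> S \<and> subsets_of_card K k \<subseteq> \<H>}"

end

theory Submission
  imports Defs "HOL-Analysis.Convex"
begin


lemma power_mean:
  fixes x :: "'b \<Rightarrow> real"
  assumes fin: "finite I" and ne: "I \<noteq> {}" and nn: "\<forall>i\<in>I. x i \<ge> 0"
  shows "real (card I) * (sum x I / real (card I)) ^ k \<le> (\<Sum>i\<in>I. x i ^ k)"
proof -
  have cv: "convex_on {0::real..} (\<lambda>x. x^k)"
  proof (cases "even k")
    case True
    then show ?thesis using convex_on_subset[OF convex_power_even[OF True]] by blast
  next
    case False
    then show ?thesis using convex_power_odd by blast
  qed
  have N: "real (card I) > 0" using fin ne by (simp add: card_gt_0_iff)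
  have "(\<Sum>i\<in>I. (1 / real (card I)) *\<^sub>R x i) ^ k \<le> (\<Sum>i\<in>I. (1 / real (card I)) * x i ^ k)"
    using convex_on_sum[OF fin ne cv, where a = "\<lambda>_. 1 / real (card I)" and y = x] N nn
    by auto
  then have "(sum x I / real (card I)) ^ k \<le> (\<Sum>i\<in>I. x i ^ k) / real (card I)"
    by (simp add: sum_distrib_right[symmetric] sum_distrib_left[symmetric] divide_inverse mult.commute)
  then show ?thesis using N by (simp add: field_simps)
qed

lemma greedy:
  assumes "finite X"
    and ex: "\<And>Y. Y \<subseteq> X \<Longrightarrow> real (card Y) > w \<Longrightarrow> \<exists>T\<subseteq>Y. card T = k \<and> T \<notin> G"
    and k: "k \<ge> 1"
  shows "\<exists>MM. finite MM \<and> (\<forall>M\<in>MM. M \<subseteq> X \<and> card M = k \<and> M \<notin> G)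
          \<and> (\<forall>M1\<in>MM. \<forall>M2\<in>MM. M1 \<noteq> M2 \<longrightarrow> M1 \<inter> M2 = {})
          \<and> real (card X) \<le> w + real k * real (card MM)"
  using assms(1,2)
proof (induction "card X" arbitrary: X rule: less_induct)
  case less
  show ?case
  proof (cases "real (card X) > w")
    case False
    then show ?thesis by (intro exI[of _ "{}"]) auto
  next
    case True
    then obtain T where T: "T \<subseteq> X" "card T = k" "T \<notin> G" using less.prems(2)[of X] by blast
    have Tne: "T \<noteq> {}" using T k by auto
    have finT: "finite T" using T less.prems(1) finite_subset by blast
    have cardeq: "card (X - T) = card X - k" using T less.prems(1) finT by (simp add: card_Diff_subset)
    have kle0: "k \<le> card X" using T less.prems(1) card_mono by blast
    have cardlt: "card (X - T) < card X" using cardeq kle0 k by linarith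
    obtain MM where MM: "finite MM" "\<forall>M\<in>MM. M \<subseteq> X - T \<and> card M = k \<and> M \<notin> G"
        "\<forall>M1\<in>MM. \<forall>M2\<in>MM. M1 \<noteq> M2 \<longrightarrow> M1 \<inter> M2 = {}"
        "real (card (X - T)) \<le> w + real k * real (card MM)"
    proof -
      have "\<exists>MM. finite MM \<and> (\<forall>M\<in>MM. M \<subseteq> X - T \<and> card M = k \<and> M \<notin> G)
          \<and> (\<forall>M1\<in>MM. \<forall>M2\<in>MM. M1 \<noteq> M2 \<longrightarrow> M1 \<inter> M2 = {})
          \<and> real (card (X - T)) \<le> w + real k * real (card MM)"
        by (rule less.hyps[OF cardlt]) (use less.prems in \<open>auto, meson Diff_subset order_trans\<close>)
      then show ?thesis using that by blast
    qed
    have TnM: "T \<notin> MM" using MM(2) Tne T(1) by blast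
    have kle: "k \<le> card X" using T less.prems(1) card_mono by blast
    show ?thesis
    proof (intro exI[of _ "insert T MM"] conjI)
      show "finite (insert T MM)" using MM by auto
      show "\<forall>M\<in>insert T MM. M \<subseteq> X \<and> card M = k \<and> M \<notin> G" using MM T by auto
      show "\<forall>M1\<in>insert T MM. \<forall>M2\<in>insert T MM. M1 \<noteq> M2 \<longrightarrow> M1 \<inter> M2 = {}"
        using MM(2,3) by blast
      have "real (card (X - T)) = real (card X) - real k" using cardeq kle by simp
      then show "real (card X) \<le> w + real k * real (card (insert T MM))"
        using MM(1,4) TnM by (simp add: algebra_simps)
    qed
  qed
qed



lemma count_K:
  assumes helly: "colorful_helly_number V H k"
    and finL: "finite L" and LV: "L \<subseteq> V"
    and finMM: "finite MM"
    and MMp: "\<forall>M\<in>MM. M \<subseteq> L \<and> card M = k \<and> M \<notin> H (t+1)"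
    and disj: "\<forall>M1\<in>MM. \<forall>M2\<in>MM. M1 \<noteq> M2 \<longrightarrow> M1 \<inter> M2 = {}"
  shows "card MM choose k \<le> card {T. T \<subseteq> L \<and> card T = k \<and> T \<notin> H t}"
proof -
  define Bad where "Bad = {T. T \<subseteq> L \<and> card T = k \<and> T \<notin> H t}"
  define g where "g T = {M\<in>MM. M \<inter> T \<noteq> {}}" for T
  define Ks where "Ks = {K. K \<subseteq> MM \<and> card K = k}"
  have cKs: "card Ks = card MM choose k" unfolding Ks_def using n_subsets[OF finMM] by simp
  have finBad: "finite Bad" unfolding Bad_def
    by (rule finite_subset[of _ "Pow L"]) (use finL in auto)
  have sub: "Ks \<subseteq> g ` Bad"
  proof
    fix K assume K: "K \<in> Ks"
    then have KM: "K \<subseteq> MM" and cK: "card K = k" unfolding Ks_def by auto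
    have finK: "finite K" using KM finMM finite_subset by blast
    obtain h0 where h0: "bij_betw h0 {0..<k} K" using ex_bij_betw_nat_finite[OF finK] cK by auto
    define h where "h j = h0 (j - 1)" for j
    have shift: "(\<lambda>j. j - 1) ` {1..k} = {0..<k}"
    proof
      show "(\<lambda>j. j - 1) ` {1..k} \<subseteq> {0..<k}" by auto
      show "{0..<k} \<subseteq> (\<lambda>j. j - 1) ` {1..k}"
      proof
        fix x assume "x \<in> {0..<k}"
        then have "Suc x \<in> {1..k}" "x = Suc x - 1" by auto
        then show "x \<in> (\<lambda>j. j - 1) ` {1..k}" by blast
      qed
    qed
    have himg: "h ` {1..k} = K"
    proof -
      have "h ` {1..k} = h0 ` ((\<lambda>j. j - 1) ` {1..k})" unfolding h_def by (simp add: image_image)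
      also have "\<dots> = K" using shift h0 unfolding bij_betw_def by simp
      finally show ?thesis .
    qed
    have hinj: "inj_on h {1..k}"
    proof (rule inj_onI)
      fix a b assume "a \<in> {1..k}" "b \<in> {1..k}" "h a = h b"
      then have "a - 1 \<in> {0..<k}" "b - 1 \<in> {0..<k}" "h0 (a-1) = h0 (b-1)" unfolding h_def by auto
      then have "a - 1 = b - 1" using h0 unfolding bij_betw_def inj_on_def by blast
      then show "a = b" using \<open>a \<in> {1..k}\<close> \<open>b \<in> {1..k}\<close> by auto
    qed
    have hM: "\<And>j. j \<in> {1..k} \<Longrightarrow> h j \<in> MM" using himg KM by blast
    have pre: "\<forall>j\<in>{1..k}. finite (h j) \<and> h j \<subseteq> V"
    proof
      fix j assume "j \<in> {1..k}"
      then have "h j \<subseteq> L" using hM MMp by blast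
      then show "finite (h j) \<and> h j \<subseteq> V" using LV finL finite_subset by blast
    qed
    have notH: "\<not> (\<exists>j\<in>{1..k}. h j \<in> H (t + 1))" using hM MMp by blast
    have hl: "(\<forall>i\<in>{1..k}. finite (h i) \<and> h i \<subseteq> V) \<longrightarrow>
        colorful_selections k h \<subseteq> H t \<longrightarrow> (\<exists>j\<in>{1..k}. h j \<in> H (t + 1))"
      using helly unfolding colorful_helly_number_def by blast
    have "\<not> colorful_selections k h \<subseteq> H t"
      using hl pre notH by blast
    then obtain T where T: "T \<in> colorful_selections k h" "T \<notin> H t" by blast
    then obtain \<phi> where phi: "\<phi> ` {1..k} = T" "\<forall>j\<in>{1..k}. \<phi> j \<in> h j"
      unfolding colorful_selections_def by blast
    have phiinj: "inj_on \<phi> {1..k}"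
    proof (rule inj_onI)
      fix a b assume ab: "a \<in> {1..k}" "b \<in> {1..k}" "\<phi> a = \<phi> b"
      then have "\<phi> a \<in> h a \<inter> h b" using phi by (metis IntI)
      then have "h a \<inter> h b \<noteq> {}" by blast
      then have "h a = h b" using disj hM[OF ab(1)] hM[OF ab(2)] by metis
      then show "a = b" using inj_onD[OF hinj _ ab(1) ab(2)] by blast
    qed
    have cT: "card T = k" using phi(1) phiinj card_image by fastforce
    have TL: "T \<subseteq> L" using phi hM MMp by blast
    have TB: "T \<in> Bad" unfolding Bad_def using cT TL T(2) by blast
    have "g T = K"
    proof
      show "g T \<subseteq> K"
      proof
        fix M assume "M \<in> g T"
        then have M: "M \<in> MM" "M \<inter> T \<noteq> {}" unfolding g_def by auto
        then obtain j where j: "j \<in> {1..k}" "\<phi> j \<in> M" using phi(1) by blast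
        then have "\<phi> j \<in> h j" using phi by auto
        then have "M \<inter> h j \<noteq> {}" using j(2) by blast
        then have "M = h j" using disj M(1) hM[OF j(1)] by metis
        then show "M \<in> K" using himg j(1) by blast
      qed
      show "K \<subseteq> g T"
      proof
        fix M assume "M \<in> K"
        then obtain j where j: "j \<in> {1..k}" "M = h j" using himg by blast
        then have "\<phi> j \<in> M \<inter> T" using phi by auto
        then show "M \<in> g T" unfolding g_def using hM j by blast
      qed
    qed
    then show "K \<in> g ` Bad" using TB by blast
  qed
  have "card Ks \<le> card (g ` Bad)"
    using sub finBad by (simp add: card_mono)
  also have "\<dots> \<le> card Bad" using finBad card_image_le by blast
  finally show ?thesis using cKs unfolding Bad_def by simp
qed



lemma core:
  fixes V :: "'a set" and H :: "int \<Rightarrow> 'a set set" and S :: "'a set" and n :: nat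
    and t :: int and c :: real and i :: nat and F :: "'a set set"
  assumes k1: "k \<ge> 1" and chain: "hypergraph_chain V H" and helly: "colorful_helly_number V H k"
   and SV: "S \<subseteq> V" and finS: "finite S" and cS: "card S = n" and nN: "n \<ge> 4*k"
   and c0: "0 < c" and om: "real (omega k (restrict_hg (H (t + 1)) S) S) \<le> c * real n / 2"
   and i: "i \<in> {1..k}" and FS: "F \<subseteq> subsets_of_card S i" and cF: "real (card F) \<ge> c * real (n choose i)"
  shows "\<exists>F' M. F' \<subseteq> subsets_of_card S (i - 1) \<and>
        M \<in> subsets_of_card S k - H t \<and>
        real (card F') \<ge> (c / (12 * real k ^ 2)) ^ k * real (n choose (i - 1)) \<and>
        (\<forall>A\<in>F'. \<forall>v\<in>M. A \<union> {v} \<in> F)"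
proof (rule ccontr)
  assume contra: "\<not> ?thesis"
  define \<theta> where "\<theta> = (c / (12 * real k ^ 2)) ^ k"
  define N0 where "N0 = n choose (i - 1)"
  define AA where "AA = subsets_of_card S (i - 1)"
  define L where "L A = {v \<in> S. A \<union> {v} \<in> F}" for A
  define NT where "NT T = {A \<in> AA. T \<subseteq> L A}" for T
  define bad where "bad = subsets_of_card S k - H t"
  have small: "real (card (NT T)) < \<theta> * real N0" if T: "T \<in> bad" for T
  proof -
    have "NT T \<subseteq> subsets_of_card S (i-1)" unfolding NT_def AA_def by auto
    moreover have "\<forall>A\<in>NT T. \<forall>v\<in>T. A \<union> {v} \<in> F" unfolding NT_def L_def by auto
    moreover have "T \<in> subsets_of_card S k - H t" using T unfolding bad_def .
    ultimately have "\<not> (real (card (NT T)) \<ge> \<theta> * real N0)"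
      using contra unfolding \<theta>_def N0_def by blast
    then show ?thesis by simp
  qed
  have ik: "1 \<le> i" "i \<le> k" using i by auto
  have kn: "k \<le> n" using nN by simp
  have finAA: "finite AA" unfolding AA_def subsets_of_card_def
    by (rule finite_subset[of _ "Pow S"]) (use finS in auto)
  have cAA: "card AA = N0" unfolding AA_def subsets_of_card_def N0_def
    using n_subsets[OF finS] cS by simp
  have N0pos: "N0 > 0" unfolding N0_def using ik kn by simp
  have finbad: "finite bad" unfolding bad_def subsets_of_card_def
    by (rule finite_subset[of _ "Pow S"]) (use finS in auto)
  have cbad: "card bad \<le> n choose k"
  proof -
    have "card bad \<le> card (subsets_of_card S k)" unfolding bad_def
      by (rule card_mono) (use finS in \<open>auto simp: subsets_of_card_def intro: finite_subset[of _ "Pow S"]\<close>)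
    also have "\<dots> = n choose k" unfolding subsets_of_card_def using n_subsets[OF finS] cS by simp
    finally show ?thesis .
  qed
  have LS: "L A \<subseteq> S" for A unfolding L_def by auto
  have finL: "finite (L A)" for A using LS finS finite_subset by blast
  have Hmono: "H t \<subseteq> H (t + 1)" using chain unfolding hypergraph_chain_def by blast
  have omega_prop: "\<exists>T\<subseteq>Y. card T = k \<and> T \<notin> H (t+1)"
    if Y: "Y \<subseteq> S" "real (card Y) > c * real n / 2" for Y
  proof (rule ccontr)
    assume "\<not> (\<exists>T\<subseteq>Y. card T = k \<and> T \<notin> H (t+1))"
    then have sub: "subsets_of_card Y k \<subseteq> restrict_hg (H (t+1)) S"
      unfolding subsets_of_card_def restrict_hg_def using Y(1) by auto
    have fin: "finite {card K | K. K \<subseteq> S \<and> subsets_of_card K k \<subseteq> restrict_hg (H (t+1)) S}"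
      by (rule finite_subset[of _ "{..card S}"]) (auto intro: card_mono finS)
    have "card Y \<le> omega k (restrict_hg (H (t+1)) S) S" unfolding omega_def
      by (rule Max_ge[OF fin]) (use Y sub in blast)
    then show False using om Y(2) by linarith
  qed
  have vnotin: "v \<notin> A" if "A \<in> AA" "v \<in> L A" for A v
  proof
    assume "v \<in> A"
    then have "A \<union> {v} = A" by blast
    moreover have "A \<union> {v} \<in> F" using that(2) unfolding L_def by blast
    ultimately have "card A = i" using FS unfolding subsets_of_card_def by auto
    moreover have "card A = i - 1" using that(1) unfolding AA_def subsets_of_card_def by auto
    ultimately show False using ik by simp
  qed
  have sumL: "(\<Sum>A\<in>AA. card (L A)) = i * card F"
  proof -
    have "F \<subseteq> Pow S" using FS unfolding subsets_of_card_def by auto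
    then have finF: "finite F" using finS finite_subset by auto
    have "(\<Sum>A\<in>AA. card (L A)) = card (Sigma AA L)"
      by (rule card_SigmaI[symmetric]) (use finAA finL in auto)
    also have "\<dots> = card (Sigma F (\<lambda>B. B))"
    proof (rule bij_betw_same_card[of "\<lambda>(A,v). (A \<union> {v}, v)"])
      show "bij_betw (\<lambda>(A,v). (A \<union> {v}, v)) (Sigma AA L) (Sigma F (\<lambda>B. B))"
      proof (rule bij_betw_byWitness[where f'="\<lambda>(B,v). (B - {v}, v)"])
        show "\<forall>a\<in>Sigma AA L. (\<lambda>(B,v). (B - {v}, v)) ((\<lambda>(A,v). (A \<union> {v}, v)) a) = a"
          using vnotin by auto
        show "\<forall>a\<in>Sigma F (\<lambda>B. B). (\<lambda>(A,v). (A \<union> {v}, v)) ((\<lambda>(B,v). (B - {v}, v)) a) = a"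
          by auto
        show "(\<lambda>(A,v). (A \<union> {v}, v)) ` Sigma AA L \<subseteq> Sigma F (\<lambda>B. B)"
          unfolding L_def by auto
        show "(\<lambda>(B,v). (B - {v}, v)) ` Sigma F (\<lambda>B. B) \<subseteq> Sigma AA L"
        proof
          fix p assume "p \<in> (\<lambda>(B,v). (B - {v}, v)) ` Sigma F (\<lambda>B. B)"
          then obtain B v where Bv: "B \<in> F" "v \<in> B" "p = (B - {v}, v)" by auto
          then have BS: "B \<subseteq> S" "card B = i" using FS unfolding subsets_of_card_def by auto
          have finB: "finite B" using BS finS finite_subset by blast
          have "B - {v} \<in> AA" unfolding AA_def subsets_of_card_def using BS Bv finB by auto
          moreover have "v \<in> L (B - {v})" unfolding L_def using Bv BS by (auto simp: insert_absorb)
          ultimately show "p \<in> Sigma AA L" using Bv by auto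
        qed
      qed
    qed
    also have "\<dots> = (\<Sum>B\<in>F. card B)"
      by (rule card_SigmaI) (use finF FS finS in \<open>auto simp: subsets_of_card_def intro: finite_subset\<close>)
    also have "\<dots> = (\<Sum>B\<in>F. i)"
      by (rule sum.cong) (use FS in \<open>auto simp: subsets_of_card_def\<close>)
    also have "\<dots> = i * card F" by simp
    finally show ?thesis .
  qed
  have binom: "i * (n choose i) = (n - (i - 1)) * N0"
  proof -
    obtain j where j: "i = Suc j" using ik by (cases i) auto
    have "Suc j * (n choose Suc j) = n * ((n - 1) choose j)" by (rule binomial_absorption)
    also have "\<dots> = (n - j) * (n choose j)" by (rule binomial_absorb_comp[symmetric])
    finally show ?thesis unfolding N0_def using j by simp
  qed
  have sumLr: "(\<Sum>A\<in>AA. real (card (L A))) \<ge> c * (real n - real i + 1) * real N0"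
  proof -
    have "(\<Sum>A\<in>AA. real (card (L A))) = real i * real (card F)"
      using sumL by (metis of_nat_mult of_nat_sum)
    also have "\<dots> \<ge> real i * (c * real (n choose i))" using cF by (simp add: mult_left_mono)
    finally have a: "(\<Sum>A\<in>AA. real (card (L A))) \<ge> c * real (i * (n choose i))" by (simp add: algebra_simps)
    have "real (i * (n choose i)) = (real n - real i + 1) * real N0"
      using binom ik kn by (simp add: of_nat_diff)
    then show ?thesis using a by (metis mult.assoc)
  qed
  have thn: "\<theta> * real n ^ k = (c * real n / (12 * real k ^ 2)) ^ k"
    unfolding \<theta>_def by (metis power_mult_distrib times_divide_eq_left)
  have thpos: "\<theta> > 0" unfolding \<theta>_def using c0 k1 by simp
  show False
  proof (cases "c * real n \<ge> 6 * real k ^ 2")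
    case False
    have thN0: "\<theta> * real N0 \<le> 1"
    proof -
      have "N0 \<le> n ^ (i - 1)" unfolding N0_def by (rule binomial_le_pow) (use ik kn in simp)
      also have "\<dots> \<le> n ^ k" by (rule power_increasing) (use ik nN k1 in auto)
      finally have "real N0 \<le> real n ^ k" by (metis of_nat_le_iff of_nat_power)
      then have "\<theta> * real N0 \<le> \<theta> * real n ^ k" using thpos by simp
      also have "\<dots> = (c * real n / (12 * real k ^ 2)) ^ k" by (rule thn)
      also have "\<dots> \<le> 1"
      proof (rule power_le_one)
        show "0 \<le> c * real n / (12 * real k ^ 2)" using c0 by simp
        have "c * real n \<le> 12 * real k ^ 2" using False zero_le_power2[of "real k"] by linarith
        then show "c * real n / (12 * real k ^ 2) \<le> 1" using k1 by simp
      qed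
      finally show ?thesis .
    qed
    obtain A where A: "A \<in> AA" "real (card (L A)) > c * real n / 2"
    proof (rule ccontr)
      assume "\<not> thesis"
      then have le: "\<forall>A\<in>AA. real (card (L A)) \<le> c * real n / 2" using that by force
      have "(\<Sum>A\<in>AA. real (card (L A))) \<le> real (card AA) * (c * real n / 2)"
        using sum_bounded_above[of AA "\<lambda>A. real (card (L A))" "c * real n / 2"] le by blast
      also have "\<dots> < c * (real n - real i + 1) * real N0"
      proof -
        have "real n / 2 < real n - real i + 1" using nN ik by simp
        then have lt: "c * (real n / 2) < c * (real n - real i + 1)" using c0 by simp
        have "real N0 * (c * (real n / 2)) < real N0 * (c * (real n - real i + 1))"
          by (rule mult_strict_left_mono[OF lt]) (simp add: N0pos)
        then show ?thesis using cAA by (simp add: algebra_simps)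
      qed
      finally show False using sumLr by simp
    qed
    obtain T where T: "T \<subseteq> L A" "card T = k" "T \<notin> H (t+1)" using omega_prop[OF LS A(2)] by blast
    have Tb: "T \<in> bad" unfolding bad_def subsets_of_card_def using T LS Hmono by blast
    have "A \<in> NT T" unfolding NT_def using A T by blast
    moreover have "finite (NT T)" unfolding NT_def using finAA by simp
    ultimately have "card (NT T) \<ge> 1" by (metis One_nat_def Suc_leI card_gt_0_iff empty_iff)
    then show False using small[OF Tb] thN0 by linarith
  next
    case True
    have "\<forall>A\<in>AA. \<exists>MM. finite MM \<and> (\<forall>M\<in>MM. M \<subseteq> L A \<and> card M = k \<and> M \<notin> H (t+1))
          \<and> (\<forall>M1\<in>MM. \<forall>M2\<in>MM. M1 \<noteq> M2 \<longrightarrow> M1 \<inter> M2 = {})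
          \<and> real (card (L A)) \<le> c * real n / 2 + real k * real (card MM)"
    proof
      fix A assume "A \<in> AA"
      show "\<exists>MM. finite MM \<and> (\<forall>M\<in>MM. M \<subseteq> L A \<and> card M = k \<and> M \<notin> H (t+1))
          \<and> (\<forall>M1\<in>MM. \<forall>M2\<in>MM. M1 \<noteq> M2 \<longrightarrow> M1 \<inter> M2 = {})
          \<and> real (card (L A)) \<le> c * real n / 2 + real k * real (card MM)"
        by (rule greedy[OF finL _ k1]) (use omega_prop LS in \<open>meson order_trans\<close>)
    qed
    then obtain MM where MM: "\<forall>A\<in>AA. finite (MM A) \<and> (\<forall>M\<in>MM A. M \<subseteq> L A \<and> card M = k \<and> M \<notin> H (t+1))
          \<and> (\<forall>M1\<in>MM A. \<forall>M2\<in>MM A. M1 \<noteq> M2 \<longrightarrow> M1 \<inter> M2 = {})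
          \<and> real (card (L A)) \<le> c * real n / 2 + real k * real (card (MM A))"
      by (metis (no_types, lifting) bchoice)
    define m where "m A = card (MM A)" for A
    have cnt: "m A choose k \<le> card {T\<in>bad. T \<subseteq> L A}" if A: "A \<in> AA" for A
    proof -
      have MA: "finite (MM A)" "\<forall>M\<in>MM A. M \<subseteq> L A \<and> card M = k \<and> M \<notin> H (t+1)"
          "\<forall>M1\<in>MM A. \<forall>M2\<in>MM A. M1 \<noteq> M2 \<longrightarrow> M1 \<inter> M2 = {}"
        using MM A by simp_all
      have LV: "L A \<subseteq> V" using LS[of A] SV by (rule order_trans)
      have le: "m A choose k \<le> card {T. T \<subseteq> L A \<and> card T = k \<and> T \<notin> H t}"
        unfolding m_def by (rule count_K[OF helly finL LV MA])
      have eq: "{T. T \<subseteq> L A \<and> card T = k \<and> T \<notin> H t} = {T\<in>bad. T \<subseteq> L A}"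
      proof (rule set_eqI)
        fix T
        have "T \<subseteq> L A \<Longrightarrow> T \<subseteq> S" using LS[of A] by blast
        then show "T \<in> {T. T \<subseteq> L A \<and> card T = k \<and> T \<notin> H t} \<longleftrightarrow> T \<in> {T\<in>bad. T \<subseteq> L A}"
          unfolding bad_def subsets_of_card_def by auto
      qed
      show ?thesis using le unfolding eq .
    qed
    have swap: "(\<Sum>A\<in>AA. card {T\<in>bad. T \<subseteq> L A}) = (\<Sum>T\<in>bad. card (NT T))"
    proof -
      have "(\<Sum>A\<in>AA. card {T\<in>bad. T \<subseteq> L A}) = (\<Sum>A\<in>AA. \<Sum>T\<in>bad. if T \<subseteq> L A then 1 else 0)"
      proof (rule sum.cong)
        fix A show "card {T\<in>bad. T \<subseteq> L A} = (\<Sum>T\<in>bad. if T \<subseteq> L A then 1 else 0)"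
          by (subst sum.inter_filter[OF finbad, symmetric]) simp
      qed simp
      also have "\<dots> = (\<Sum>T\<in>bad. \<Sum>A\<in>AA. if T \<subseteq> L A then 1 else 0)" by (rule sum.swap)
      also have "\<dots> = (\<Sum>T\<in>bad. card (NT T))"
      proof (rule sum.cong)
        fix T show "(\<Sum>A\<in>AA. if T \<subseteq> L A then 1 else 0) = card (NT T)"
          unfolding NT_def by (subst sum.inter_filter[OF finAA, symmetric]) simp
      qed simp
      finally show ?thesis .
    qed
    have up: "(\<Sum>A\<in>AA. real (m A choose k)) \<le> (\<Sum>T\<in>bad. real (card (NT T)))"
    proof -
      have "(\<Sum>A\<in>AA. real (m A choose k)) \<le> (\<Sum>A\<in>AA. real (card {T\<in>bad. T \<subseteq> L A}))"
        by (rule sum_mono) (use cnt in simp)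
      also have "\<dots> = (\<Sum>T\<in>bad. real (card (NT T)))" by (simp only: of_nat_sum[symmetric] swap)
      finally show ?thesis .
    qed
    have strict: "(\<Sum>T\<in>bad. real (card (NT T))) < \<theta> * real N0 * real (n choose k)"
    proof (cases "bad = {}")
      case True
      have "0 < real (n choose k)" using kn by simp
      then show ?thesis using True thpos N0pos by simp
    next
      case False
      have "(\<Sum>T\<in>bad. real (card (NT T))) < (\<Sum>T\<in>bad. \<theta> * real N0)"
        by (rule sum_strict_mono[OF finbad False]) (use small in simp)
      also have "\<dots> = real (card bad) * (\<theta> * real N0)" by simp
      also have "\<dots> \<le> real (n choose k) * (\<theta> * real N0)"
        using cbad thpos N0pos by (intro mult_right_mono) simp_all
      finally show ?thesis by (simp add: algebra_simps)
    qed
    define x where "x A = (if m A \<ge> k then real (m A) else 0) / real k" for A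
    have xC: "x A ^ k \<le> real (m A choose k)" for A
    proof (cases "m A \<ge> k")
      case True
      then show ?thesis unfolding x_def using binomial_ge_n_over_k_pow_k[of k "m A", where 'a=real] by simp
    next
      case False
      then show ?thesis unfolding x_def using k1 by (simp add: power_0_left)
    qed
    have xnn: "\<forall>A\<in>AA. x A \<ge> 0" unfolding x_def by simp
    have xlow: "real k * x A \<ge> real (m A) - real k" for A
      unfolding x_def using k1 by auto
    have msum: "real k * (\<Sum>A\<in>AA. real (m A)) \<ge> (\<Sum>A\<in>AA. real (card (L A))) - real N0 * (c * real n / 2)"
    proof -
      have "(\<Sum>A\<in>AA. real (card (L A))) \<le> (\<Sum>A\<in>AA. c * real n / 2 + real k * real (m A))"
        by (rule sum_mono) (use MM m_def in auto)
      also have "\<dots> = real N0 * (c * real n / 2) + real k * (\<Sum>A\<in>AA. real (m A))"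
        by (simp add: sum.distrib sum_distrib_left cAA)
      finally show ?thesis by simp
    qed
    have xsum: "real k * (\<Sum>A\<in>AA. x A) \<ge> (\<Sum>A\<in>AA. real (m A)) - real k * real N0"
    proof -
      have "(\<Sum>A\<in>AA. real (m A) - real k) \<le> (\<Sum>A\<in>AA. real k * x A)"
        by (rule sum_mono) (use xlow in simp)
      then show ?thesis by (simp add: sum_subtractf sum_distrib_left cAA mult.commute)
    qed
    have "real n \<ge> 4 * real k" "real i \<le> real k" using nN ik by simp_all
    then have nhalf: "real n / 2 - real i + 1 \<ge> real n / 4" by linarith
    have "real k * (\<Sum>A\<in>AA. real (m A)) \<ge> c * real N0 * (real n / 4)"
    proof -
      have "c * (real n - real i + 1) * real N0 - real N0 * (c * real n / 2)
            = c * real N0 * (real n / 2 - real i + 1)" by (simp add: algebra_simps)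
      also have "\<dots> \<ge> c * real N0 * (real n / 4)"
        using nhalf c0 N0pos by (intro mult_left_mono) simp_all
      finally show ?thesis using msum sumLr by linarith
    qed
    moreover have "real k * (real k * (\<Sum>A\<in>AA. x A)) \<ge> real k * ((\<Sum>A\<in>AA. real (m A)) - real k * real N0)"
      by (rule mult_left_mono[OF xsum]) simp
    ultimately have "real k * (real k * (\<Sum>A\<in>AA. x A)) \<ge> c * real N0 * (real n / 4) - real k * real k * real N0"
      by (simp add: right_diff_distrib)
    moreover have "real k * real k * real N0 \<le> c * real N0 * real n / 6"
    proof -
      have "real k * real k \<le> c * real n / 6" using True by (simp add: power2_eq_square)
      then have "real k * real k * real N0 \<le> (c * real n / 6) * real N0"
        by (rule mult_right_mono) simp
      then show ?thesis by (simp add: mult_ac)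
    qed
    ultimately have "real k ^ 2 * (\<Sum>A\<in>AA. x A) \<ge> c * real N0 * real n / 12"
      by (simp add: power2_eq_square algebra_simps)
    then have avg: "(\<Sum>A\<in>AA. x A) / real N0 \<ge> c * real n / (12 * real k ^ 2)"
      using N0pos k1 by (simp add: field_simps)
    have "\<theta> * real N0 * real (n choose k) \<le> \<theta> * real N0 * real n ^ k"
    proof -
      have "n choose k \<le> n ^ k" by (rule binomial_le_pow[OF kn])
      then have "real (n choose k) \<le> real n ^ k" by (metis of_nat_le_iff of_nat_power)
      then show ?thesis using thpos N0pos by simp
    qed
    also have "\<dots> = real N0 * (\<theta> * real n ^ k)" by simp
    also have "\<dots> = real N0 * (c * real n / (12 * real k ^ 2)) ^ k" by (simp only: thn)
    also have "\<dots> \<le> real N0 * ((\<Sum>A\<in>AA. x A) / real N0) ^ k"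
      using avg c0 by (intro mult_left_mono power_mono) simp_all
    also have "\<dots> \<le> (\<Sum>A\<in>AA. x A ^ k)"
    proof -
      have "AA \<noteq> {}" using cAA N0pos by auto
      then show ?thesis using power_mean[OF finAA _ xnn, of k] cAA by simp
    qed
    also have "\<dots> \<le> (\<Sum>A\<in>AA. real (m A choose k))" by (rule sum_mono) (rule xC)
    finally show False using up strict by linarith
  qed
qed

theorem lemma2:
  fixes k :: nat
  shows "\<exists>N :: nat. \<forall>(V :: 'a set) (\<H> :: int \<Rightarrow> 'a set set) (S :: 'a set) (n :: nat)
            (t :: int) (c :: real) (i :: nat) (F :: 'a set set).
     hypergraph_chain V \<H> \<and> colorful_helly_number V \<H> k \<and>
     S \<subseteq> V \<and> finite S \<and> card S = n \<and> n \<ge> N \<and>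
     0 < c \<and> c < 1 \<and>
     real (omega k (restrict_hg (\<H> (t + 1)) S) S) \<le> c * real n / 2 \<and>
     i \<in> {1..k} \<and> F \<subseteq> subsets_of_card S i \<and>
     real (card F) \<ge> c * real (n choose i)
     \<longrightarrow>
     (\<exists>F' M. F' \<subseteq> subsets_of_card S (i - 1) \<and>
        M \<in> subsets_of_card S k - \<H> t \<and>
        real (card F') \<ge> (c / (12 * real k ^ 2)) ^ k * real (n choose (i - 1)) \<and>
        (\<forall>A\<in>F'. \<forall>v\<in>M. A \<union> {v} \<in> F))"
  proof (cases "k = 0")
  case True
  then show ?thesis by (intro exI[of _ 0]) auto
next
  case False
  then have k1: "k \<ge> 1" by simp
  show ?thesis
    apply (rule exI[of _ "4*k"])
    apply (intro allI impI)
    apply (elim conjE)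
    apply (rule core[OF k1])
               apply assumption+
    done
qed

end
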